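(* Let $w$ be a weakly cyclically reduced word on $\{\alpha_n^{\pm1},\dots,\alpha_1^{\pm1},\beta^{\pm1}\}$ in which some letter $\alpha_i^{\pm1}$ occurs (i.e. $w\notin\langle\beta\rangle$). For every finite subset $F$ of the vertex set $X$ of the pre-graph $G_0$, there exists an extension $G$ of $G_0$ such that the cycle $C(w,v_0)$ embeds in $G$ and its image contains no vertex of $F$.
   Context: A graph consists of a vertex set $V$, an edge set $E$, a fixed-point-free involution $e\mapsto\bar e$ on $E$, and maps $i,t:E\to V$ with $i(\bar e)=t(e)$. A labeling on $S^{\pm1}$ is a map $l:E\to S^{\pm1}$ with $l(\bar e)=l(e)^{-1}$. A labeled graph is well-labeled if $i(e)=i(e')$ and $l(e)=l(e')$ imply $e=e'$. A homomorphism of labeled graphs maps vertices to vertices and edges to edges preserving $i$, $t$ and labels; an embedding is an injective homomorphism. A word $w_m\cdots w_1$ is reduced if $w_{j+1}\neq w_j^{-1}$ for all $j$, and weakly cyclically reduced if moreover $w_m\neq w_1^{-1}$ (equality $w_m=w_1$ is allowed). For such $w$, the cycle $C(w,v_0)$ is the labeled graph with $m$ distinct vertices $v_0,\dots,v_{m-1}$ and directed edges $e_1,\dots,e_m$ (with their inverses), $e_j$ going from $v_{j-1}$ to $v_j$ (indices mod $m$, so $t(e_m)=v_0$) with label $w_j$. Let $X$ be an infinite countable set and $\beta$ a permutation of $X$ acting simply transitively. The pre-graph $G_0$ has vertex set $X$ and for each $x\in X$ one directed edge from $x$ to $\beta(x)$ labeled $\beta$ (with its inverse labeled $\beta^{-1}$).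 An extension of $G_0$ is a well-labeled graph labeled on $\{\alpha_n^{\pm1},\dots,\alpha_1^{\pm1},\beta^{\pm1}\}$ containing $G_0$ and with vertex set exactly $X$. *)

theory Defs
  imports Main "HOL-Library.Countable_Set"
begin

text \<open>Generators: Beta is beta, Alpha i is alpha_i (meaningful for 1 <= i <= n).
  A letter is a generator together with an exponent sign (True = +1, False = -1).\<close>

datatype gen = Alpha nat | Beta

type_synonym letter = "gen \<times> bool"

definition linv :: "letter \<Rightarrow> letter" where
  "linv a = (fst a, \<not> snd a)"

definition alphabet :: "nat \<Rightarrow> letter set" where
  "alphabet n = {(Alpha i, s) | i s. 1 \<le> i \<and> i \<le> n} \<union> {(Beta, s) | s. True}"

text \<open>A word w = w_m ... w_1 is represented by the list [w_m, ..., w_1] in written order;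
  thus the letter w_j (1 <= j <= m) is  w ! (length w - j).\<close>

definition wlet :: "letter list \<Rightarrow> nat \<Rightarrow> letter" where
  "wlet w j = w ! (length w - j)"

definition reduced_word :: "letter list \<Rightarrow> bool" where
  "reduced_word w \<longleftrightarrow> (\<forall>j. 1 \<le> j \<and> j < length w \<longrightarrow> wlet w (Suc j) \<noteq> linv (wlet w j))"

definition weakly_cyclically_reduced :: "letter list \<Rightarrow> bool" where
  "weakly_cyclically_reduced w \<longleftrightarrow> w \<noteq> [] \<and> reduced_word w \<and>
     wlet w (length w) \<noteq> linv (wlet w 1)"

record ('v, 'e) lgraph =
  verts :: "'v set"
  edges :: "'e set"
  bar :: "'e \<Rightarrow> 'e"
  src :: "'e \<Rightarrow> 'v"
  tgt :: "'e \<Rightarrow> 'v"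
  lab :: "'e \<Rightarrow> letter"

definition is_lgraph :: "('v, 'e) lgraph \<Rightarrow> bool" where
  "is_lgraph G \<longleftrightarrow> (\<forall>e \<in> edges G.
      bar G e \<in> edges G \<and> bar G (bar G e) = e \<and> bar G e \<noteq> e \<and>
      src G e \<in> verts G \<and> tgt G e \<in> verts G \<and> src G (bar G e) = tgt G e \<and>
      lab G (bar G e) = linv (lab G e))"

definition labeled_on :: "nat \<Rightarrow> ('v, 'e) lgraph \<Rightarrow> bool" where
  "labeled_on n G \<longleftrightarrow> (\<forall>e \<in> edges G. lab G e \<in> alphabet n)"

definition well_labeled :: "('v, 'e) lgraph \<Rightarrow> bool" where
  "well_labeled G \<longleftrightarrow> (\<forall>e \<in> edges G. \<forall>e' \<in> edges G.
      src G e = src G e' \<and> lab G e = lab G e' \<longrightarrow> e = e')"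

definition lhom :: "('v, 'e) lgraph \<Rightarrow> ('w, 'f) lgraph \<Rightarrow> ('v \<Rightarrow> 'w) \<Rightarrow> ('e \<Rightarrow> 'f) \<Rightarrow> bool" where
  "lhom G H f g \<longleftrightarrow> f ` verts G \<subseteq> verts H \<and> g ` edges G \<subseteq> edges H \<and>
     (\<forall>e \<in> edges G. src H (g e) = f (src G e) \<and> tgt H (g e) = f (tgt G e) \<and>
        lab H (g e) = lab G e \<and> g (bar G e) = bar H (g e))"

definition lembedding :: "('v, 'e) lgraph \<Rightarrow> ('w, 'f) lgraph \<Rightarrow> ('v \<Rightarrow> 'w) \<Rightarrow> ('e \<Rightarrow> 'f) \<Rightarrow> bool" where
  "lembedding G H f g \<longleftrightarrow> lhom G H f g \<and> inj_on f (verts G) \<and> inj_on g (edges G)"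

text \<open>Vertices v_0..v_{m-1} are 0..m-1 (v_0 = 0); edge e_j (1 <= j <= m) is (j, True),
  going from v_{j-1} to v_{j mod m} with label w_j; its inverse is (j, False).\<close>

definition cycle_graph :: "letter list \<Rightarrow> (nat, nat \<times> bool) lgraph" where
  "cycle_graph w = (let m = length w in
     \<lparr> verts = {..<m},
       edges = {1..m} \<times> UNIV,
       bar = (\<lambda>(j, b). (j, \<not> b)),
       src = (\<lambda>(j, b). if b then j - 1 else j mod m),
       tgt = (\<lambda>(j, b). if b then j mod m else j - 1),
       lab = (\<lambda>(j, b). if b then wlet w j else linv (wlet w j)) \<rparr>)"

definition beta_pow :: "'x set \<Rightarrow> ('x \<Rightarrow> 'x) \<Rightarrow> int \<Rightarrow> 'x \<Rightarrow> 'x" where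
  "beta_pow X \<beta> k = (if 0 \<le> k then \<beta> ^^ nat k else inv_into X \<beta> ^^ nat (- k))"

definition simply_transitive :: "'x set \<Rightarrow> ('x \<Rightarrow> 'x) \<Rightarrow> bool" where
  "simply_transitive X \<beta> \<longleftrightarrow> (\<forall>x \<in> X. \<forall>y \<in> X. \<exists>!k::int. beta_pow X \<beta> k x = y)"

definition pre_graph :: "'x set \<Rightarrow> ('x \<Rightarrow> 'x) \<Rightarrow> ('x, 'x \<times> bool) lgraph" where
  "pre_graph X \<beta> =
     \<lparr> verts = X,
       edges = X \<times> UNIV,
       bar = (\<lambda>(x, b). (x, \<not> b)),
       src = (\<lambda>(x, b). if b then x else \<beta> x),
       tgt = (\<lambda>(x, b). if b then \<beta> x else x),
       lab = (\<lambda>(x, b). (Beta, b)) \<rparr>"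

definition extension :: "nat \<Rightarrow> 'x set \<Rightarrow> ('x \<Rightarrow> 'x) \<Rightarrow> ('x, 'e) lgraph \<Rightarrow> bool" where
  "extension n X \<beta> G \<longleftrightarrow> is_lgraph G \<and> labeled_on n G \<and> well_labeled G \<and>
     verts G = X \<and> (\<exists>g. lembedding (pre_graph X \<beta>) G id g)"

end

theory Submission
  imports Defs
begin

lemma linv_linv[simp]: "linv (linv l) = l" by (simp add: linv_def)
lemma linv_neq[simp]: "linv l \<noteq> l" by (cases l) (simp add: linv_def)
lemma fst_linv[simp]: "fst (linv l) = fst l" by (simp add: linv_def)
lemma snd_linv[simp]: "snd (linv l) = (\<not> snd l)" by (simp add: linv_def)
lemma alphabet_linv: "l \<in> alphabet n \<Longrightarrow> linv l \<in> alphabet n"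
  by (auto simp: alphabet_def linv_def)
lemma Beta_in_alphabet: "(Beta, s) \<in> alphabet n" by (simp add: alphabet_def)

lemma wlet_in_set: "1 \<le> j \<Longrightarrow> j \<le> length w \<Longrightarrow> wlet w j \<in> set w"
  by (simp add: wlet_def)

definition sg :: "letter \<Rightarrow> int" where "sg l = (if snd l then 1 else -1)"

lemma sg_abs[simp]: "\<bar>sg l\<bar> = 1" by (simp add: sg_def)
lemma sg_nz[simp]: "sg l \<noteq> 0" by (simp add: sg_def)
lemma sg_range: "-1 \<le> sg l \<and> sg l \<le> 1" by (simp add: sg_def)

fun ss :: "letter list \<Rightarrow> nat \<Rightarrow> int" where
  "ss w 0 = 0" | "ss w (Suc j) = ss w j + sg (wlet w (Suc j))"
fun bs :: "letter list \<Rightarrow> nat \<Rightarrow> int" where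
  "bs w 0 = 0" | "bs w (Suc j) = bs w j + (if fst (wlet w (Suc j)) = Beta then sg (wlet w (Suc j)) else 0)"
fun ac :: "letter list \<Rightarrow> nat \<Rightarrow> nat" where
  "ac w 0 = 0" | "ac w (Suc j) = ac w j + (if fst (wlet w (Suc j)) = Beta then 0 else 1)"

lemma ss_bound: "\<bar>ss w j\<bar> \<le> int j"
proof (induction j)
  case (Suc j) thus ?case using sg_range[of "wlet w (Suc j)"] by (simp add: abs_le_iff)
qed simp
lemma bs_bound: "\<bar>bs w j\<bar> \<le> int j"
proof (induction j)
  case (Suc j) thus ?case using sg_range[of "wlet w (Suc j)"] by (simp add: abs_le_iff)
qed simp
lemma ac_bound: "ac w j \<le> j" by (induction j) auto

lemma ac_mono: "a \<le> b \<Longrightarrow> ac w a \<le> ac w b \<and> (ac w a = ac w b \<longrightarrow> (\<forall>k. a < k \<and> k \<le> b \<longrightarrow> fst (wlet w k) = Beta))"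
proof (induction b)
  case 0 thus ?case by simp
next
  case (Suc b)
  show ?case
  proof (cases "a = Suc b")
    case True
    show ?thesis using True by (simp add: True) (meson leD)
  next
    case False
    with Suc.prems have "a \<le> b" by simp
    with Suc.IH show ?thesis by (auto simp: le_Suc_eq split: if_splits)
  qed
qed

lemma sg_step:
  assumes "reduced_word w" "1 \<le> i" "i < length w" "fst (wlet w i) = Beta" "fst (wlet w (Suc i)) = Beta"
  shows "sg (wlet w (Suc i)) = sg (wlet w i)"
proof -
  have "wlet w (Suc i) \<noteq> linv (wlet w i)" using assms(1-3) by (simp add: reduced_word_def)
  thus ?thesis using assms(4,5) by (cases "wlet w i"; cases "wlet w (Suc i)") (auto simp: sg_def linv_def)
qed

lemma sg_wrap:
  assumes "weakly_cyclically_reduced w" "fst (wlet w 1) = Beta" "fst (wlet w (length w)) = Beta"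
  shows "sg (wlet w (length w)) = sg (wlet w 1)"
proof -
  have "wlet w (length w) \<noteq> linv (wlet w 1)" using assms(1) by (simp add: weakly_cyclically_reduced_def)
  thus ?thesis using assms(2,3) by (cases "wlet w 1"; cases "wlet w (length w)") (auto simp: sg_def linv_def)
qed

lemma run:
  assumes "reduced_word w"
  shows "b \<le> length w \<Longrightarrow> a \<le> b \<Longrightarrow> (\<forall>k. a < k \<and> k \<le> b \<longrightarrow> fst (wlet w k) = Beta) \<Longrightarrow>
    ss w b - ss w a = int (b - a) * sg (wlet w (Suc a)) \<and> bs w b - bs w a = ss w b - ss w a \<and>
    ac w b = ac w a \<and> (a < b \<longrightarrow> sg (wlet w b) = sg (wlet w (Suc a)))"
proof (induction b)
  case 0 thus ?case by simp
next
  case (Suc b)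
  show ?case
  proof (cases "a = Suc b")
    case True thus ?thesis by simp
  next
    case False
    with Suc.prems have ab: "a \<le> b" by simp
    have IH: "ss w b - ss w a = int (b - a) * sg (wlet w (Suc a)) \<and> bs w b - bs w a = ss w b - ss w a \<and>
      ac w b = ac w a \<and> (a < b \<longrightarrow> sg (wlet w b) = sg (wlet w (Suc a)))"
      using Suc ab by auto
    have B: "fst (wlet w (Suc b)) = Beta" using Suc.prems ab by auto
    have S: "sg (wlet w (Suc b)) = sg (wlet w (Suc a))"
    proof (cases "a = b")
      case True thus ?thesis by simp
    next
      case False
      hence "a < b" using ab by simp
      hence "sg (wlet w (Suc b)) = sg (wlet w b)"
        using sg_step[OF assms, of b] Suc.prems B by auto
      thus ?thesis using IH \<open>a < b\<close> by simp
    qed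
    have e: "int (Suc b - a) = int (b - a) + 1" using ab by simp
    show ?thesis using IH B S ab by (simp add: e algebra_simps)
  qed
qed

definition qq :: "letter list \<Rightarrow> nat" where
  "qq w = Max {j \<in> {1..length w}. fst (wlet w j) \<noteq> Beta}"

lemma qq_props:
  assumes "\<exists>j\<in>{1..length w}. fst (wlet w j) \<noteq> Beta"
  shows "1 \<le> qq w" "qq w \<le> length w" "fst (wlet w (qq w)) \<noteq> Beta"
    "\<And>k. qq w < k \<Longrightarrow> k \<le> length w \<Longrightarrow> fst (wlet w k) = Beta"
proof -
  let ?S = "{j \<in> {1..length w}. fst (wlet w j) \<noteq> Beta}"
  have f: "finite ?S" by simp
  have ne: "?S \<noteq> {}" using assms by auto
  have "qq w \<in> ?S" unfolding qq_def using Max_in[OF f ne] .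
  thus "1 \<le> qq w" "qq w \<le> length w" "fst (wlet w (qq w)) \<noteq> Beta" by auto
  fix k assume "qq w < k" "k \<le> length w"
  show "fst (wlet w k) = Beta"
  proof (rule ccontr)
    assume "fst (wlet w k) \<noteq> Beta"
    hence "k \<in> ?S" using \<open>qq w < k\<close> \<open>k \<le> length w\<close> by auto
    hence "k \<le> qq w" unfolding qq_def using Max_ge[OF f] by blast
    thus False using \<open>qq w < k\<close> by simp
  qed
qed

definition hh :: "letter list \<Rightarrow> nat \<Rightarrow> int" where
  "hh w j = (if j < qq w then (4 * int (length w) + 1) * int (ac w j) + bs w j
             else ss w j - ss w (length w))"

lemma hh_lower: assumes "j \<le> length w" shows "hh w j \<ge> - 2 * int (length w)"
proof (cases "j < qq w")
  case True
  have "0 \<le> (4 * int (length w) + 1) * int (ac w j)" by simp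
  moreover have "- int (length w) \<le> bs w j" using bs_bound[of w j] assms by (simp add: abs_le_iff)
  moreover have "hh w j = (4 * int (length w) + 1) * int (ac w j) + bs w j" using True by (simp add: hh_def)
  ultimately show ?thesis by linarith
next
  case False
  thus ?thesis using assms ss_bound[of w j] ss_bound[of w "length w"] by (simp add: hh_def abs_le_iff)
qed

lemma hh_step:
  assumes wcr: "weakly_cyclically_reduced w"
    and al: "\<exists>j\<in>{1..length w}. fst (wlet w j) \<noteq> Beta"
    and j: "1 \<le> j" "j \<le> length w" "fst (wlet w j) = Beta"
  shows "hh w (j mod length w) = hh w (j - 1) + sg (wlet w j)"
proof -
  note q = qq_props[OF al]
  have jq: "j \<noteq> qq w" using q(3) j(3) by auto
  obtain j0 where j0: "j = Suc j0" using j(1) by (cases j) auto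
  show ?thesis
  proof (cases "j < qq w")
    case True
    hence "j < length w" using q(2) by simp
    thus ?thesis using True j(3) by (simp add: hh_def j0)
  next
    case False
    hence qj: "qq w < j" using jq by simp
    show ?thesis
    proof (cases "j < length w")
      case True
      thus ?thesis using qj by (simp add: hh_def j0)
    next
      case False
      hence jm: "j = length w" using j by simp
      have "0 < qq w" using q(1) by simp
      hence h0: "hh w (j mod length w) = 0" using jm by (simp add: hh_def)
      have "\<not> j0 < qq w" using qj j0 by simp
      hence h1: "hh w (j - 1) = ss w j0 - ss w (length w)" using j0 by (simp add: hh_def)
      have "ss w (length w) = ss w j0 + sg (wlet w j)" using jm j0 by (metis ss.simps(2))
      thus ?thesis using h0 h1 by simp
    qed
  qed
qed

lemma hh_inj_lt:
  assumes wcr: "weakly_cyclically_reduced w"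
    and al: "\<exists>j\<in>{1..length w}. fst (wlet w j) \<noteq> Beta"
    and jj: "j < j'" "j' < length w"
  shows "hh w j \<noteq> hh w j'"
proof -
  have rw: "reduced_word w" using wcr by (simp add: weakly_cyclically_reduced_def)
  note q = qq_props[OF al]
  define m where "m = length w"
  define K where "K = 4 * int m + 1"
  have hd: "\<And>i. i < qq w \<Longrightarrow> hh w i = K * int (ac w i) + bs w i" by (simp add: hh_def K_def m_def)
  have tl: "\<And>i. \<not> i < qq w \<Longrightarrow> hh w i = ss w i - ss w m" by (simp add: hh_def m_def)
  have nz: "\<And>n l. n > 0 \<Longrightarrow> int n * sg l \<noteq> 0" by simp
  show ?thesis
  proof (cases "j' < qq w")
    case True
    hence h1: "hh w j = K * int (ac w j) + bs w j" "hh w j' = K * int (ac w j') + bs w j'"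
      using hd jj by auto
    have am: "ac w j \<le> ac w j'" using ac_mono[of j j' w] jj by simp
    show ?thesis
    proof (cases "ac w j = ac w j'")
      case True
      hence "\<forall>k. j < k \<and> k \<le> j' \<longrightarrow> fst (wlet w k) = Beta" using ac_mono[of j j' w] jj by simp
      hence "ss w j' - ss w j = int (j' - j) * sg (wlet w (Suc j)) \<and> bs w j' - bs w j = ss w j' - ss w j"
        using run[OF rw, of j' j] jj by simp
      moreover have "int (j' - j) * sg (wlet w (Suc j)) \<noteq> 0" using jj by simp
      ultimately show ?thesis using h1 True by auto
    next
      case False
      hence "ac w j + 1 \<le> ac w j'" using am by simp
      hence "int (ac w j) + 1 \<le> int (ac w j')" by linarith
      hence "K * (int (ac w j) + 1) \<le> K * int (ac w j')"
        by (rule mult_left_mono) (simp add: K_def)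
      hence "K * int (ac w j) + K \<le> K * int (ac w j')" by (simp add: algebra_simps)
      moreover have "\<bar>bs w j\<bar> \<le> int m" "\<bar>bs w j'\<bar> \<le> int m"
        using bs_bound[of w j] bs_bound[of w j'] jj unfolding m_def by linarith+
      ultimately show ?thesis using h1 K_def by (simp add: abs_le_iff)
    qed
  next
    case False
    hence tj': "hh w j' = ss w j' - ss w m" using tl by simp
    show ?thesis
    proof (cases "j < qq w")
      case False
      hence "\<forall>k. j < k \<and> k \<le> j' \<longrightarrow> fst (wlet w k) = Beta" using q(4) jj by auto
      hence "ss w j' - ss w j = int (j' - j) * sg (wlet w (Suc j))"
        using run[OF rw, of j' j] jj by simp
      moreover have "int (j' - j) * sg (wlet w (Suc j)) \<noteq> 0" using jj by simp
      ultimately show ?thesis using tj' tl[OF False] by auto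
    next
      case True
      hence hj: "hh w j = K * int (ac w j) + bs w j" using hd by simp
      have tailB: "\<forall>k. j' < k \<and> k \<le> m \<longrightarrow> fst (wlet w k) = Beta" using q(4) False m_def by auto
      have tr: "ss w m - ss w j' = int (m - j') * sg (wlet w (Suc j')) \<and> (j' < m \<longrightarrow> sg (wlet w m) = sg (wlet w (Suc j')))"
        using run[OF rw, of m j', OF _ _ tailB] jj m_def by simp
      have mB: "fst (wlet w m) = Beta" using tailB jj m_def by simp
      show ?thesis
      proof (cases "ac w j = 0")
        case False
        hence "K \<le> K * int (ac w j)" using K_def by simp
        moreover have "\<bar>bs w j\<bar> \<le> int m" using bs_bound[of w j] jj m_def by linarith
        moreover have "\<bar>ss w j'\<bar> \<le> int m" "\<bar>ss w m\<bar> \<le> int m"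
          using ss_bound[of w j'] ss_bound[of w m] jj m_def by linarith+
        ultimately show ?thesis using hj tj' K_def unfolding abs_le_iff by linarith
      next
        case True
        hence headB: "\<forall>k. 0 < k \<and> k \<le> j \<longrightarrow> fst (wlet w k) = Beta"
          using ac_mono[of 0 j w] by simp
        have hr: "ss w j - ss w 0 = int j * sg (wlet w 1) \<and> bs w j - bs w 0 = ss w j - ss w 0"
          using run[OF rw, of j 0, OF _ _ headB] jj m_def by simp
        hence hj2: "hh w j = int j * sg (wlet w 1)" using hj True by simp
        have hj'2: "hh w j' = - (int (m - j') * sg (wlet w m))" using tj' tr jj m_def by simp
        show ?thesis
        proof (cases "j = 0")
          case True
          thus ?thesis using hj2 hj'2 jj m_def by simp
        next
          case False
          hence "fst (wlet w 1) = Beta" using headB by simp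
          hence "sg (wlet w m) = sg (wlet w 1)" using sg_wrap[OF wcr] mB m_def by simp
          hence "hh w j - hh w j' = int (j + (m - j')) * sg (wlet w 1)"
            using hj2 hj'2 by (simp add: algebra_simps)
          moreover have "int (j + (m - j')) * sg (wlet w 1) \<noteq> 0" using False by simp
          ultimately show ?thesis by auto
        qed
      qed
    qed
  qed
qed

lemma hh_inj:
  assumes "weakly_cyclically_reduced w" "\<exists>j\<in>{1..length w}. fst (wlet w j) \<noteq> Beta"
  shows "inj_on (hh w) {..<length w}"
proof (rule inj_onI)
  fix x y assume "x \<in> {..<length w}" "y \<in> {..<length w}" "hh w x = hh w y"
  thus "x = y" using hh_inj_lt[OF assms, of x y] hh_inj_lt[OF assms, of y x]
    by (metis lessThan_iff linorder_neqE_nat)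
qed

lemma mod_cases: "1 \<le> j \<Longrightarrow> j \<le> (m::nat) \<Longrightarrow> j mod m = (if j = m then 0 else j)"
  by (cases "j = m") auto

lemma cg_simps:
  "verts (cycle_graph w) = {..<length w}"
  "edges (cycle_graph w) = {1..length w} \<times> UNIV"
  "bar (cycle_graph w) (j, b) = (j, \<not> b)"
  "src (cycle_graph w) (j, b) = (if b then j - 1 else j mod length w)"
  "tgt (cycle_graph w) (j, b) = (if b then j mod length w else j - 1)"
  "lab (cycle_graph w) (j, b) = (if b then wlet w j else linv (wlet w j))"
  by (simp_all add: cycle_graph_def Let_def)

lemma cyc_TF:
  assumes wcr: "weakly_cyclically_reduced w"
    and j: "1 \<le> j" "j \<le> length w" and j': "1 \<le> j'" "j' \<le> length w"
    and s: "j - 1 = j' mod length w" and l: "wlet w j = linv (wlet w j')"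
  shows False
proof (cases "j' = length w")
  case True
  hence "j = 1" using s j by simp
  hence "wlet w (length w) = linv (wlet w 1)" using l True by simp
  thus False using wcr by (simp add: weakly_cyclically_reduced_def)
next
  case False
  hence "j' = j - 1" using s j' by simp
  hence "j = Suc j'" "j' < length w" using j j' False by auto
  moreover have "reduced_word w" using wcr by (simp add: weakly_cyclically_reduced_def)
  ultimately have "wlet w j \<noteq> linv (wlet w j')" using j' by (simp add: reduced_word_def)
  thus False using l by simp
qed

lemma cyc_wl:
  assumes wcr: "weakly_cyclically_reduced w"
    and e: "e \<in> edges (cycle_graph w)" "e' \<in> edges (cycle_graph w)"
    and s: "src (cycle_graph w) e = src (cycle_graph w) e'"
    and l: "lab (cycle_graph w) e = lab (cycle_graph w) e'"
  shows "e = e'"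
proof -
  obtain j b where jb: "e = (j, b)" by (cases e)
  obtain j' b' where jb': "e' = (j', b')" by (cases e')
  have j: "1 \<le> j" "j \<le> length w" and j': "1 \<le> j'" "j' \<le> length w"
    using e jb jb' by (auto simp: cg_simps)
  show ?thesis
  proof (cases b; cases b')
    assume "b" "b'" thus ?thesis using s j j' jb jb' by (simp add: cg_simps)
  next
    assume "\<not> b" "\<not> b'" thus ?thesis using s j j' jb jb' mod_cases[of j "length w"] mod_cases[of j' "length w"]
      by (simp add: cg_simps split: if_splits)
  next
    assume "b" "\<not> b'"
    hence "j - 1 = j' mod length w" "wlet w j = linv (wlet w j')" using s l jb jb' by (simp_all add: cg_simps)
    thus ?thesis using cyc_TF[OF wcr j j'] by blast
  next
    assume "\<not> b" "b'"
    hence "j' - 1 = j mod length w" "wlet w j' = linv (wlet w j)" using s l jb jb'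
      by (simp_all add: cg_simps)
    thus ?thesis using cyc_TF[OF wcr j' j] by blast
  qed
qed

lemma bp_in: assumes "bij_betw \<beta> X X" "x \<in> X" shows "beta_pow X \<beta> k x \<in> X"
proof -
  have a: "(\<beta> ^^ n) x \<in> X" for n
    by (induction n) (use assms in \<open>auto dest: bij_betwE\<close>)
  have b: "(inv_into X \<beta> ^^ n) x \<in> X" for n
  proof (induction n)
    case (Suc n)
    have "\<beta> ` X = X" using assms(1) by (simp add: bij_betw_def)
    thus ?case using Suc by (simp add: inv_into_into)
  qed (use assms in simp)
  show ?thesis using a b by (simp add: beta_pow_def)
qed

lemma bp_neg: assumes "k < 0" shows "beta_pow X \<beta> k x = inv_into X \<beta> (beta_pow X \<beta> (k + 1) x)"
proof -
  have n: "nat (- k) = Suc (nat (- (k + 1)))" using assms by simp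
  show ?thesis
  proof (cases "k = -1")
    case True thus ?thesis by (simp add: beta_pow_def)
  next
    case False
    hence "\<not> 0 \<le> k + 1" using assms by simp
    thus ?thesis using assms by (simp add: beta_pow_def n del: funpow.simps) (simp)
  qed
qed

lemma bp_succ: assumes "bij_betw \<beta> X X" "x \<in> X"
  shows "beta_pow X \<beta> (k + 1) x = \<beta> (beta_pow X \<beta> k x)"
proof (cases "0 \<le> k")
  case True
  hence "nat (k + 1) = Suc (nat k)" by simp
  thus ?thesis using True by (simp add: beta_pow_def)
next
  case False
  hence "beta_pow X \<beta> k x = inv_into X \<beta> (beta_pow X \<beta> (k + 1) x)" by (simp add: bp_neg)
  moreover have "beta_pow X \<beta> (k + 1) x \<in> \<beta> ` X"
    using bp_in[OF assms] assms(1) by (simp add: bij_betw_def)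
  ultimately show ?thesis by (simp add: f_inv_into_f)
qed

lemma bp_pred: assumes "bij_betw \<beta> X X" "x \<in> X"
  shows "beta_pow X \<beta> (k - 1) x = inv_into X \<beta> (beta_pow X \<beta> k x)"
proof -
  have "beta_pow X \<beta> k x = \<beta> (beta_pow X \<beta> (k - 1) x)" using bp_succ[OF assms, of "k - 1"] by simp
  moreover have "inj_on \<beta> X" using assms(1) by (simp add: bij_betw_def)
  ultimately show ?thesis using bp_in[OF assms] by (simp add: inv_into_f_f)
qed

theorem lemma9:
  fixes n :: nat and X :: "'x set" and \<beta> :: "'x \<Rightarrow> 'x"
    and w :: "letter list" and F :: "'x set"
  assumes "infinite X" and "countable X"
    and "bij_betw \<beta> X X" and "simply_transitive X \<beta>"
    and "set w \<subseteq> alphabet n"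
    and "weakly_cyclically_reduced w"
    and "\<exists>a \<in> set w. fst a \<noteq> Beta"
    and "finite F" and "F \<subseteq> X"
  shows "\<exists>G :: ('x, 'x \<times> letter) lgraph. extension n X \<beta> G \<and>
           (\<exists>f g. lembedding (cycle_graph w) G f g \<and> f ` verts (cycle_graph w) \<inter> F = {})"
proof -
  note bij = assms(3)
  note wcr = assms(6)
  define P where "P = beta_pow X \<beta>"
  define m where "m = length w"
  have m0: "0 < m" using wcr by (simp add: weakly_cyclically_reduced_def m_def)
  have al: "\<exists>j\<in>{1..length w}. fst (wlet w j) \<noteq> Beta"
  proof -
    obtain a where a: "a \<in> set w" "fst a \<noteq> Beta" using assms(7) by blast
    then obtain i where i: "i < length w" "w ! i = a" by (auto simp: in_set_conv_nth)
    have "wlet w (length w - i) = a" using i by (simp add: wlet_def)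
    thus ?thesis using i a by (intro bexI[of _ "length w - i"]) auto
  qed
  have imX: "\<beta> ` X = X" and injb: "inj_on \<beta> X" using bij by (auto simp: bij_betw_def)
  obtain x0 where x0: "x0 \<in> X" using assms(1) by (metis ex_in_conv finite.emptyI)
  have PX: "P k x0 \<in> X" for k unfolding P_def using bp_in[OF bij x0] .
  define crd where "crd y = (THE k. P k x0 = y)" for y
  have crd_eq: "crd (P k x0) = k" for k
  proof -
    have "\<exists>!k'. P k' x0 = P k x0" using assms(4) x0 PX unfolding simply_transitive_def P_def by blast
    thus ?thesis unfolding crd_def by (rule the1_equality) simp
  qed
  define M where "M = (\<Sum>y\<in>F. \<bar>crd y\<bar>)"
  define C where "C = M + 2 * int m + 1"
  define f where "f j = P (C + hh w j) x0" for j
  have fX: "f j \<in> X" for j by (simp add: f_def PX)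
  have finj: "inj_on f {..<m}"
  proof (rule inj_onI)
    fix a b assume ab: "a \<in> {..<m}" "b \<in> {..<m}" "f a = f b"
    hence "C + hh w a = C + hh w b" using crd_eq unfolding f_def by metis
    thus "a = b" using hh_inj[OF wcr al] ab unfolding m_def by (auto dest: inj_onD)
  qed
  have fF: "f j \<notin> F" if "j \<le> m" for j
  proof
    assume "f j \<in> F"
    hence "\<bar>crd (f j)\<bar> \<le> M" unfolding M_def using assms(8)
      by (intro member_le_sum) auto
    moreover have "crd (f j) = C + hh w j" unfolding f_def by (rule crd_eq)
    moreover have "hh w j \<ge> - 2 * int m" using hh_lower[of j w] that m_def by simp
    ultimately show False unfolding C_def by linarith
  qed
  have fstep: "(s \<longrightarrow> f (j mod m) = \<beta> (f (j - 1)) \<and> f (j - 1) = inv_into X \<beta> (f (j mod m))) \<and>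
      (\<not> s \<longrightarrow> f (j mod m) = inv_into X \<beta> (f (j - 1)) \<and> f (j - 1) = \<beta> (f (j mod m)))"
    if j: "1 \<le> j" "j \<le> m" "wlet w j = (Beta, s)" for j s
  proof -
    have hs: "hh w (j mod m) = hh w (j - 1) + sg (wlet w j)"
      using hh_step[OF wcr al, of j] j m_def by simp
    show ?thesis
    proof (cases s)
      case True
      hence e: "C + hh w (j mod m) = (C + hh w (j - 1)) + 1" using hs j by (simp add: sg_def)
      have 1: "f (j mod m) = \<beta> (f (j - 1))" unfolding f_def e P_def using bp_succ[OF bij x0] by simp
      have "f (j - 1) = inv_into X \<beta> (f (j mod m))" using 1 fX injb by (simp add: inv_into_f_f)
      thus ?thesis using 1 True by simp
    next
      case False
      hence e: "C + hh w (j mod m) = (C + hh w (j - 1)) - 1" using hs j by (simp add: sg_def)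
      have 1: "f (j mod m) = inv_into X \<beta> (f (j - 1))" unfolding f_def e P_def using bp_pred[OF bij x0] by simp
      have "f (j - 1) = \<beta> (f (j mod m))" using 1 fX imX by (metis f_inv_into_f)
      thus ?thesis using 1 False by simp
    qed
  qed
  define Cg where "Cg = cycle_graph w"
  have Cgs: "verts Cg = {..<m}" "edges Cg = {1..m} \<times> UNIV"
    "\<And>j b. bar Cg (j, b) = (j, \<not> b)"
    "\<And>j b. src Cg (j, b) = (if b then j - 1 else j mod m)"
    "\<And>j b. tgt Cg (j, b) = (if b then j mod m else j - 1)"
    "\<And>j b. lab Cg (j, b) = (if b then wlet w j else linv (wlet w j))"
    unfolding Cg_def m_def by (simp_all add: cg_simps)
  have st_lt: "src Cg e < m \<and> tgt Cg e < m" if "e \<in> edges Cg" for e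
    using that m0 by (cases e) (auto simp: Cgs)
  have barCg: "bar Cg e \<in> edges Cg \<and> src Cg (bar Cg e) = tgt Cg e \<and> tgt Cg (bar Cg e) = src Cg e
      \<and> lab Cg (bar Cg e) = linv (lab Cg e)" if "e \<in> edges Cg" for e
    using that by (cases e) (auto simp: Cgs)
  have labA: "lab Cg e \<in> alphabet n" if "e \<in> edges Cg" for e
  proof -
    obtain j b where e: "e = (j, b)" by (cases e)
    have "wlet w j \<in> alphabet n" using that e assms(5) wlet_in_set[of j w] by (auto simp: Cgs m_def)
    thus ?thesis using e by (simp add: Cgs alphabet_linv)
  qed
  define AC where "AC = {e \<in> edges Cg. fst (lab Cg e) \<noteq> Beta}"
  define T where "T = (\<lambda>(x, l). if fst l = Beta then (if snd l then \<beta> x else inv_into X \<beta> x)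
      else f (tgt Cg (SOME e. e \<in> AC \<and> f (src Cg e) = x \<and> lab Cg e = l)))"
  define g where "g = (\<lambda>e. (f (src Cg e), lab Cg e))"
  define G where "G = \<lparr> verts = X,
      edges = {p. fst p \<in> X \<and> fst (snd p) = Beta} \<union> g ` AC,
      bar = (\<lambda>p. (T p, linv (snd p))), src = fst, tgt = T, lab = snd \<rparr>"
  have TG: "T (g e) = f (tgt Cg e)" if e: "e \<in> edges Cg" for e
  proof (cases "fst (lab Cg e) = Beta")
    case False
    define e' where "e' = (SOME e'. e' \<in> AC \<and> f (src Cg e') = f (src Cg e) \<and> lab Cg e' = lab Cg e)"
    have eA: "e \<in> AC" using e False by (simp add: AC_def)
    have "e' \<in> AC \<and> f (src Cg e') = f (src Cg e) \<and> lab Cg e' = lab Cg e"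
      unfolding e'_def by (rule someI[where x = e]) (simp add: eA)
    hence h: "e' \<in> edges Cg" "f (src Cg e') = f (src Cg e)" "lab Cg e' = lab Cg e" by (auto simp: AC_def)
    have "src Cg e' = src Cg e" using inj_onD[OF finj h(2)] st_lt[OF h(1)] st_lt[OF e] by simp
    hence "e' = e" using cyc_wl[OF wcr, of e' e] h e by (simp add: Cg_def)
    thus ?thesis using False unfolding T_def g_def e'_def by simp
  next
    case True
    obtain j b where jb: "e = (j, b)" by (cases e)
    have j: "1 \<le> j" "j \<le> m" using e jb by (auto simp: Cgs)
    have fB: "fst (wlet w j) = Beta" using True jb by (cases b) (simp_all add: Cgs)
    obtain s where s: "wlet w j = (Beta, s)" using fB by (cases "wlet w j") auto
    note fs = fstep[OF j s]
    show ?thesis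
    proof (cases b)
      case True
      hence ge: "g e = (f (j - 1), (Beta, s))" and te: "tgt Cg e = j mod m" by (simp_all add: g_def jb Cgs s)
      show ?thesis
      proof (cases s)
        case True
        hence "f (j mod m) = \<beta> (f (j - 1))" using fs by blast
        thus ?thesis using True ge te by (simp add: T_def)
      next
        case False
        hence "f (j mod m) = inv_into X \<beta> (f (j - 1))" using fs by blast
        thus ?thesis using False ge te by (simp add: T_def)
      qed
    next
      case False
      hence ge: "g e = (f (j mod m), (Beta, \<not> s))" and te: "tgt Cg e = j - 1"
        by (simp_all add: g_def jb Cgs s linv_def)
      show ?thesis
      proof (cases s)
        case True
        hence "f (j - 1) = inv_into X \<beta> (f (j mod m))" using fs by blast
        thus ?thesis using True ge te by (simp add: T_def)
      next
        case False
        hence "f (j - 1) = \<beta> (f (j mod m))" using fs by blast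
        thus ?thesis using False ge te by (simp add: T_def)
      qed
    qed
  qed
  have gE: "g e \<in> edges G" if e: "e \<in> edges Cg" for e
  proof (cases "fst (lab Cg e) = Beta")
    case True thus ?thesis using fX by (simp add: G_def g_def)
  next
    case False thus ?thesis using e by (simp add: G_def AC_def)
  qed
  have isG: "is_lgraph G"
    unfolding is_lgraph_def
  proof
    fix p assume p: "p \<in> edges G"
    show "bar G p \<in> edges G \<and> bar G (bar G p) = p \<and> bar G p \<noteq> p \<and>
      src G p \<in> verts G \<and> tgt G p \<in> verts G \<and> src G (bar G p) = tgt G p \<and>
      lab G (bar G p) = linv (lab G p)"
    proof (cases "p \<in> g ` AC")
      case True
      then obtain e where e: "e \<in> AC" "p = g e" by blast
      have eE: "e \<in> edges Cg" using e by (simp add: AC_def)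
      note bc = barCg[OF eE]
      have Tp: "T p = f (tgt Cg e)" using TG[OF eE] e by simp
      have bp: "bar G p = g (bar Cg e)" using Tp e bc by (simp add: G_def g_def)
      have "bar G (bar G p) = p"
        using bp TG[OF conjunct1[OF bc]] bc e by (simp add: G_def g_def)
      moreover have "bar G p \<in> edges G" using bp gE[OF conjunct1[OF bc]] by simp
      moreover have "bar G p \<noteq> p" by (simp add: G_def prod_eq_iff)
      moreover have "src G p \<in> verts G" "tgt G p \<in> verts G" using Tp fX e by (simp_all add: G_def g_def)
      moreover have "src G (bar G p) = tgt G p" "lab G (bar G p) = linv (lab G p)" by (simp_all add: G_def)
      ultimately show ?thesis by blast
    next
      case False
      then obtain x s where xs: "p = (x, (Beta, s))" "x \<in> X" using p by (cases p) (auto simp: G_def prod_eq_iff)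
      have bx: "\<beta> x \<in> X" "inv_into X \<beta> x \<in> X" using xs imX by (auto intro: inv_into_into)
      show ?thesis using xs bx injb imX
        by (cases s) (auto simp: G_def T_def linv_def inv_into_f_f f_inv_into_f)
    qed
  qed
  have lG: "labeled_on n G" unfolding labeled_on_def
  proof
    fix p assume p: "p \<in> edges G"
    show "lab G p \<in> alphabet n"
    proof (cases "p \<in> g ` AC")
      case True thus ?thesis using labA by (auto simp: G_def g_def AC_def)
    next
      case False
      hence "snd p = (Beta, snd (snd p))" using p by (auto simp: G_def prod_eq_iff)
      thus ?thesis using Beta_in_alphabet by (simp add: G_def) (metis)
    qed
  qed
  have wG: "well_labeled G" unfolding well_labeled_def by (simp add: G_def prod_eq_iff)
  define g0 where "g0 = (\<lambda>(x::'x, b::bool). if b then (x, (Beta, True)) else (\<beta> x, (Beta, False)))"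
  have emb0: "lembedding (pre_graph X \<beta>) G id g0"
    unfolding lembedding_def lhom_def
  proof (intro conjI)
    show "id ` verts (pre_graph X \<beta>) \<subseteq> verts G" by (simp add: pre_graph_def G_def)
    show "g0 ` edges (pre_graph X \<beta>) \<subseteq> edges G"
      using bij by (auto simp: pre_graph_def G_def g0_def dest: bij_betwE)
    show "\<forall>e\<in>edges (pre_graph X \<beta>). src G (g0 e) = id (src (pre_graph X \<beta>) e) \<and>
        tgt G (g0 e) = id (tgt (pre_graph X \<beta>) e) \<and> lab G (g0 e) = lab (pre_graph X \<beta>) e \<and>
        g0 (bar (pre_graph X \<beta>) e) = bar G (g0 e)"
      using injb by (auto simp: pre_graph_def G_def g0_def T_def linv_def inv_into_f_f)
    show "inj_on id (verts (pre_graph X \<beta>))" by simp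
    show "inj_on g0 (edges (pre_graph X \<beta>))"
      using injb by (auto simp: inj_on_def pre_graph_def g0_def dest: inj_onD)
  qed
  have ext: "extension n X \<beta> G"
    unfolding extension_def using isG lG wG emb0 by (auto simp: G_def)
  have embC: "lembedding Cg G f g"
    unfolding lembedding_def lhom_def
  proof (intro conjI)
    show "f ` verts Cg \<subseteq> verts G" using fX by (auto simp: G_def)
    show "g ` edges Cg \<subseteq> edges G" using gE by auto
    show "\<forall>e\<in>edges Cg. src G (g e) = f (src Cg e) \<and> tgt G (g e) = f (tgt Cg e) \<and>
        lab G (g e) = lab Cg e \<and> g (bar Cg e) = bar G (g e)"
    proof
      fix e assume e: "e \<in> edges Cg"
      show "src G (g e) = f (src Cg e) \<and> tgt G (g e) = f (tgt Cg e) \<and>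
        lab G (g e) = lab Cg e \<and> g (bar Cg e) = bar G (g e)"
        using TG[OF e] barCg[OF e] by (simp add: G_def g_def)
    qed
    show "inj_on f (verts Cg)" using finj by (simp add: Cgs)
    show "inj_on g (edges Cg)"
    proof (rule inj_onI)
      fix a b assume ab: "a \<in> edges Cg" "b \<in> edges Cg" "g a = g b"
      hence "f (src Cg a) = f (src Cg b)" "lab Cg a = lab Cg b" by (auto simp: g_def)
      hence "src Cg a = src Cg b" "lab Cg a = lab Cg b"
        using inj_onD[OF finj] st_lt[OF ab(1)] st_lt[OF ab(2)] by auto
      thus "a = b" using cyc_wl[OF wcr] ab unfolding Cg_def by blast
    qed
  qed
  have avoid: "f ` verts Cg \<inter> F = {}" using fF by (auto simp: Cgs)
  show ?thesis using ext embC avoid unfolding Cg_def by blast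
qed

end
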